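(* For every $s\in[0,1]$ there is a constant $C$ such that for all $f\in H^1$ and all $\varepsilon\in(0,1)$ with $\varepsilon^{-1}\in\mathbb{N}$, $$\big\|(1-\partial_x^2)^{-s/2}f^\varepsilon(1-\partial_x^2)^{s/2}\big\|_{L^2\to L^2}\le C\varepsilon^{-s}\|f\|_{H^1},$$ where $f^\varepsilon$ denotes the operator of multiplication by $f^\varepsilon(x)=f(x/\varepsilon)$.
   Context: Functions are $2\pi$-periodic; $L^2=L^2[0,2\pi]$ with inner product $\langle f,g\rangle=\frac1{2\pi}\int_0^{2\pi}f\bar g\,dx$ and norm $\|\cdot\|$; $\|f\|_{H^s}=\|(1-\partial_x^2)^{s/2}f\|$. *)

theory Defs
  imports "HOL-Analysis.Analysis"
begin

definition periodic2pi :: "(real \<Rightarrow> complex) \<Rightarrow> bool" where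
  "periodic2pi u \<longleftrightarrow> (\<forall>x. u (x + 2 * pi) = u x)"

definition fcoeff :: "(real \<Rightarrow> complex) \<Rightarrow> int \<Rightarrow> complex" where
  "fcoeff u k = complex_of_real (1 / (2 * pi)) *
     (LINT x:{0..2*pi}|lebesgue. u x * exp (- (\<i> * of_int k * complex_of_real x)))"

definition in_L2 :: "(real \<Rightarrow> complex) \<Rightarrow> bool" where
  "in_L2 u \<longleftrightarrow> periodic2pi u \<and> u \<in> borel_measurable lebesgue \<and>
     set_integrable lebesgue {0..2*pi} (\<lambda>x. (cmod (u x))\<^sup>2)"

definition L2norm :: "(real \<Rightarrow> complex) \<Rightarrow> real" where
  "L2norm u = sqrt ((1 / (2 * pi)) * (LINT x:{0..2*pi}|lebesgue. (cmod (u x))\<^sup>2))"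

text \<open>Sobolev norm: the L2 norm of (1 - d^2/dx^2)^{s/2} u, computed through the
  Fourier multiplier (1+k^2)^{s/2} and Parseval.\<close>
definition Hs_norm :: "real \<Rightarrow> (real \<Rightarrow> complex) \<Rightarrow> real" where
  "Hs_norm s u = sqrt (\<Sum>\<^sub>\<infinity>k\<in>(UNIV::int set). (1 + (real_of_int k)\<^sup>2) powr s * (cmod (fcoeff u k))\<^sup>2)"

definition Hs_summable :: "real \<Rightarrow> (real \<Rightarrow> complex) \<Rightarrow> bool" where
  "Hs_summable s u \<longleftrightarrow>
     (\<lambda>k::int. (1 + (real_of_int k)\<^sup>2) powr s * (cmod (fcoeff u k))\<^sup>2) summable_on UNIV"

definition in_H1 :: "(real \<Rightarrow> complex) \<Rightarrow> bool" where
  "in_H1 u \<longleftrightarrow> in_L2 u \<and> Hs_summable 1 u"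

definition trig_poly :: "int set \<Rightarrow> (int \<Rightarrow> complex) \<Rightarrow> real \<Rightarrow> complex" where
  "trig_poly K a x = (\<Sum>k\<in>K. a k * exp (\<i> * of_int k * complex_of_real x))"

text \<open>(1 - d^2/dx^2)^{s/2} applied to the trigonometric polynomial trig_poly K a.\<close>
definition bessel_trig :: "real \<Rightarrow> int set \<Rightarrow> (int \<Rightarrow> complex) \<Rightarrow> real \<Rightarrow> complex" where
  "bessel_trig s K a x =
     (\<Sum>k\<in>K. complex_of_real ((1 + (real_of_int k)\<^sup>2) powr (s / 2)) * a k
              * exp (\<i> * of_int k * complex_of_real x))"

definition dilate :: "real \<Rightarrow> (real \<Rightarrow> complex) \<Rightarrow> real \<Rightarrow> complex" where
  "dilate \<epsilon> f x = f (x / \<epsilon>)"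

end

theory Submission
  imports Defs
begin


lemma powr_subadd:
  fixes a b s :: real
  assumes "0 \<le> a" "0 \<le> b" "0 \<le> s" "s \<le> 1"
  shows "(a + b) powr s \<le> a powr s + b powr s"
proof (cases "a + b = 0")
  case True then show ?thesis using assms by auto
next
  case False
  then have ab: "a + b > 0" using assms by auto
  have "a * (a + b) powr (s - 1) \<le> a powr s"
  proof (cases "a = 0")
    case False
    then have "a > 0" using assms by auto
    have "(a + b) powr (s - 1) \<le> a powr (s - 1)"
      using \<open>a>0\<close> assms by (intro powr_mono2') auto
    then have "a * (a + b) powr (s - 1) \<le> a * a powr (s - 1)"
      using \<open>a>0\<close> by (intro mult_left_mono) auto
    also have "\<dots> = a powr s" using \<open>a>0\<close> by (simp add: powr_diff powr_one)
    finally show ?thesis .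
  qed auto
  moreover have "b * (a + b) powr (s - 1) \<le> b powr s"
  proof (cases "b = 0")
    case False
    then have "b > 0" using assms by auto
    have "(a + b) powr (s - 1) \<le> b powr (s - 1)"
      using \<open>b>0\<close> assms by (intro powr_mono2') auto
    then have "b * (a + b) powr (s - 1) \<le> b * b powr (s - 1)"
      using \<open>b>0\<close> by (intro mult_left_mono) auto
    also have "\<dots> = b powr s" using \<open>b>0\<close> by (simp add: powr_diff powr_one)
    finally show ?thesis .
  qed auto
  moreover have "(a + b) powr s = (a + b) * (a + b) powr (s - 1)"
    using ab by (simp add: powr_diff powr_one)
  ultimately show ?thesis by (simp add: distrib_right)
qed

lemma powr_geo_le:
  fixes u v s :: real
  assumes "0 < u" "0 < v" "0 \<le> s" "s \<le> 1"
  shows "u powr s * v powr (1 - s) \<le> u + v"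
proof (cases "u \<le> v")
  case True
  have "u powr s \<le> v powr s" using True assms by (intro powr_mono2) auto
  then have "u powr s * v powr (1 - s) \<le> v powr s * v powr (1 - s)"
    by (intro mult_right_mono) auto
  also have "\<dots> = v" using assms by (simp add: powr_add[symmetric])
  finally show ?thesis using assms by simp
next
  case False
  have "v powr (1-s) \<le> u powr (1-s)" using False assms by (intro powr_mono2) auto
  then have "u powr s * v powr (1 - s) \<le> u powr s * u powr (1 - s)"
    by (intro mult_left_mono) auto
  also have "\<dots> = u" using assms by (simp add: powr_add[symmetric])
  finally show ?thesis using assms by simp
qed

definition W :: "int \<Rightarrow> real" where "W j = 1 + (real_of_int j)\<^sup>2"

lemma W_pos: "W j > 0" and W_ge1: "W j \<ge> 1"
  by (auto simp: W_def add_pos_nonneg)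

lemma W_nz[simp]: "W j \<noteq> 0" and W_sqrt_nz[simp]: "sqrt (W j) \<noteq> 0" and W_pos'[simp]: "0 < W j" and W_nneg[simp]: "0 \<le> W j"
  using W_pos[of j] by auto

lemma key_scalar:
  fixes j m :: int and n :: nat and s :: real
  assumes "n \<ge> 1" "0 \<le> s" "s \<le> 1"
  shows "W j powr (-s) * W (j - int n * m) powr s / W m
     \<le> 2 * real n powr (2 * s) * (2 / W m + 1 / W j)"
proof -
  define x where "x = W j"
  define y where "y = W m"
  define z where "z = W (j - int n * m)"
  have x: "x \<ge> 1" and y: "y \<ge> 1" and z: "z \<ge> 1" using W_ge1 x_def y_def z_def by auto
  have nn: "real n \<ge> 1" using assms by simp
  have zle: "z \<le> 2 * x + 2 * (real n)\<^sup>2 * y"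
  proof -
    have sq: "(a - b)\<^sup>2 \<le> 2 * a\<^sup>2 + 2 * b\<^sup>2" for a b :: real
    proof -
      have "(a - b)\<^sup>2 = 2 * a\<^sup>2 + 2 * b\<^sup>2 - (a + b)\<^sup>2" by (simp add: power2_eq_square algebra_simps)
      then show ?thesis by simp
    qed
    have e: "real_of_int (j - int n * m) = real_of_int j - real n * real_of_int m" by simp
    have A: "(real_of_int (j - int n * m))\<^sup>2 \<le> 2 * (real_of_int j)\<^sup>2 + 2 * ((real n)\<^sup>2 * (real_of_int m)\<^sup>2)"
      unfolding e using sq[of "real_of_int j" "real n * real_of_int m"] by (simp add: power_mult_distrib)
    have B: "2 * (real n)\<^sup>2 * (1 + (real_of_int m)\<^sup>2) = 2 * (real n)\<^sup>2 + 2 * ((real n)\<^sup>2 * (real_of_int m)\<^sup>2)"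
      by (simp add: algebra_simps)
    have C: "0 \<le> (real n)\<^sup>2" by simp
    have D: "2 * (1 + (real_of_int j)\<^sup>2) + 2 * (real n)\<^sup>2 * (1 + (real_of_int m)\<^sup>2)
       = 2 + 2 * (real_of_int j)\<^sup>2 + 2 * (real n)\<^sup>2 + 2 * ((real n)\<^sup>2 * (real_of_int m)\<^sup>2)"
      by (simp add: algebra_simps)
    have "1 + (real_of_int (j - int n * m))\<^sup>2 \<le> 1 + (2 * (real_of_int j)\<^sup>2 + 2 * ((real n)\<^sup>2 * (real_of_int m)\<^sup>2))"
      using A by simp
    also have "\<dots> \<le> 2 + 2 * (real_of_int j)\<^sup>2 + 2 * (real n)\<^sup>2 + 2 * ((real n)\<^sup>2 * (real_of_int m)\<^sup>2)"
      using C by simp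
    finally show ?thesis unfolding x_def y_def z_def W_def D .
  qed
  have "z powr s \<le> (2 * x + 2 * (real n)\<^sup>2 * y) powr s"
    using zle z assms by (intro powr_mono2) auto
  also have "\<dots> \<le> (2 * x) powr s + (2 * (real n)\<^sup>2 * y) powr s"
    using x y assms by (intro powr_subadd) auto
  also have "\<dots> = 2 powr s * x powr s + 2 powr s * (real n powr (2 * s)) * y powr s"
  proof -
    have "(2 * x) powr s = 2 powr s * x powr s" using x by (simp add: powr_mult)
    moreover have "(2 * (real n)\<^sup>2 * y) powr s = 2 powr s * ((real n)\<^sup>2 powr s) * y powr s"
      using x y by (simp add: powr_mult)
    moreover have "(real n)\<^sup>2 powr s = real n powr (2 * s)"
    proof -
      have e: "(real n)\<^sup>2 = real n powr 2" using nn by (simp add: powr_realpow)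
      show ?thesis by (subst e, rule powr_powr)
    qed
    ultimately show ?thesis by simp
  qed
  also have "\<dots> \<le> 2 * x powr s + 2 * (real n powr (2 * s)) * y powr s"
  proof -
    have "2 powr s \<le> 2" using assms powr_mono[of s 1 2] by simp
    then show ?thesis
      by (intro add_mono mult_right_mono) auto
  qed
  finally have zs: "z powr s \<le> 2 * x powr s + 2 * (real n powr (2 * s)) * y powr s" .
  have N1: "real n powr (2 * s) \<ge> 1" using nn assms by (simp add: ge_one_powr_ge_zero)
  have xs: "x powr (-s) * x powr s = 1" using x by (simp add: powr_add[symmetric])
  have geo: "x powr (-s) * y powr s / y \<le> 1/x + 1/y"
  proof -
    have "x powr (-s) * y powr s / y = (1/x) powr s * (1/y) powr (1 - s)"
    proof -
      have "(1/x) powr s = x powr (-s)" using x by (simp add: powr_divide powr_minus_divide)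
      moreover have "(1/y) powr (1 - s) = y powr s / y"
        using y by (simp add: powr_divide powr_diff)
      ultimately show ?thesis by simp
    qed
    also have "\<dots> \<le> 1/x + 1/y" using x y assms by (intro powr_geo_le) auto
    finally show ?thesis .
  qed
  have "x powr (-s) * z powr s / y \<le> x powr (-s) * (2 * x powr s + 2 * (real n powr (2 * s)) * y powr s) / y"
    using zs y by (intro divide_right_mono mult_left_mono) auto
  also have "\<dots> = 2 / y + 2 * real n powr (2 * s) * (x powr (-s) * y powr s / y)"
    using xs y by (simp add: field_simps)
  also have "\<dots> \<le> 2 / y + 2 * real n powr (2 * s) * (1/x + 1/y)"
    using geo by (intro add_left_mono mult_left_mono) auto
  also have "\<dots> \<le> 2 * real n powr (2 * s) * (2 / y + 1 / x)"
  proof -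
    have "2 / y \<le> 2 * real n powr (2 * s) * (1 / y)" using N1 y by (simp add: field_simps)
    then show ?thesis by (simp add: algebra_simps)
  qed
  finally show ?thesis unfolding x_def y_def z_def .
qed


lemma pointwise_bound:
  fixes fh a :: "int \<Rightarrow> complex" and K :: "int set" and n :: nat and s :: real and j :: int
  assumes K: "finite K" and n: "n \<ge> 1" and s: "0 \<le> s" "s \<le> 1"
    and sm: "(\<lambda>m. W m * (cmod (fh m))\<^sup>2) summable_on UNIV"
  defines "Fs \<equiv> infsum (\<lambda>m. W m * (cmod (fh m))\<^sup>2) UNIV"
  shows "W j powr (-s) * (cmod (\<Sum>k\<in>K. complex_of_real (W k powr (s/2)) * a k *
            (if int n dvd (j - k) then fh ((j - k) div int n) else 0)))\<^sup>2
    \<le> 2 * real n powr (2 * s) * Fs *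
       ((\<Sum>k\<in>K. (if int n dvd (j - k) then 2 / W ((j - k) div int n) else 0) * (cmod (a k))\<^sup>2)
        + (\<Sum>k\<in>K. (cmod (a k))\<^sup>2) / W j)"
proof -
  define Kj where "Kj = {k\<in>K. int n dvd (j - k)}"
  define mk where "mk k = (j - k) div int n" for k
  have Kj: "finite Kj" "Kj \<subseteq> K" using K by (auto simp: Kj_def)
  have kj: "k = j - int n * mk k" if "k \<in> Kj" for k
    using that by (auto simp: Kj_def mk_def)
  have inj: "inj_on mk Kj"
  proof
    fix x y assume "x \<in> Kj" "y \<in> Kj" "mk x = mk y"
    then show "x = y" using kj by metis
  qed
  have Fs0: "0 \<le> Fs" unfolding Fs_def by (intro infsum_nonneg) (auto intro: mult_nonneg_nonneg less_imp_le[OF W_pos])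
  define T where "T = (\<Sum>k\<in>Kj. W k powr (s/2) * cmod (a k) * cmod (fh (mk k)))"
  have "cmod (\<Sum>k\<in>K. complex_of_real (W k powr (s/2)) * a k *
            (if int n dvd (j - k) then fh ((j - k) div int n) else 0))
      = cmod (\<Sum>k\<in>Kj. complex_of_real (W k powr (s/2)) * a k * fh (mk k))"
    unfolding Kj_def mk_def by (simp add: sum.inter_filter[OF K, symmetric] if_distrib cong: if_cong)
  also have "\<dots> \<le> (\<Sum>k\<in>Kj. cmod (complex_of_real (W k powr (s/2)) * a k * fh (mk k)))"
    by (rule norm_sum)
  also have "\<dots> = T" unfolding T_def by (simp add: norm_mult)
  finally have PT: "cmod (\<Sum>k\<in>K. complex_of_real (W k powr (s/2)) * a k *
            (if int n dvd (j - k) then fh ((j - k) div int n) else 0)) \<le> T" .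
  have T0: "0 \<le> T" unfolding T_def by (intro sum_nonneg) auto
  have "T = (\<Sum>k\<in>Kj. (sqrt (W (mk k)) * cmod (fh (mk k))) * (W k powr (s/2) * cmod (a k) / sqrt (W (mk k))))"
    unfolding T_def by (intro sum.cong refl) (use W_pos in \<open>auto simp: field_simps\<close>)
  also have "\<dots>\<^sup>2 \<le> (\<Sum>k\<in>Kj. (sqrt (W (mk k)) * cmod (fh (mk k)))\<^sup>2) *
       (\<Sum>k\<in>Kj. (W k powr (s/2) * cmod (a k) / sqrt (W (mk k)))\<^sup>2)"
    by (rule Cauchy_Schwarz_ineq_sum)
  finally have CS: "T\<^sup>2 \<le> (\<Sum>k\<in>Kj. W (mk k) * (cmod (fh (mk k)))\<^sup>2) *
       (\<Sum>k\<in>Kj. W k powr s * (cmod (a k))\<^sup>2 / W (mk k))"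
  proof -
    assume h: "T\<^sup>2 \<le> (\<Sum>k\<in>Kj. (sqrt (W (mk k)) * cmod (fh (mk k)))\<^sup>2) *
       (\<Sum>k\<in>Kj. (W k powr (s/2) * cmod (a k) / sqrt (W (mk k)))\<^sup>2)"
    have e1: "(sqrt (W (mk k)) * cmod (fh (mk k)))\<^sup>2 = W (mk k) * (cmod (fh (mk k)))\<^sup>2" for k
      using W_pos[of "mk k"] by (simp add: power_mult_distrib)
    have e2: "(W k powr (s/2) * cmod (a k) / sqrt (W (mk k)))\<^sup>2 = W k powr s * (cmod (a k))\<^sup>2 / W (mk k)" for k
    proof -
      have "(W k powr (s/2))\<^sup>2 = W k powr s"
        using W_pos[of k] by (simp add: powr_realpow[symmetric] powr_powr)
      then show ?thesis using W_pos[of "mk k"] by (simp add: power_mult_distrib power_divide)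
    qed
    show ?thesis using h unfolding e1 e2 .
  qed
  have S1: "(\<Sum>k\<in>Kj. W (mk k) * (cmod (fh (mk k)))\<^sup>2) \<le> Fs"
  proof -
    have "(\<Sum>k\<in>Kj. W (mk k) * (cmod (fh (mk k)))\<^sup>2) = (\<Sum>m\<in>mk ` Kj. W m * (cmod (fh m))\<^sup>2)"
      by (simp add: sum.reindex[OF inj])
    also have "\<dots> \<le> Fs" unfolding Fs_def
      using Kj by (intro finite_sum_le_infsum sm) (auto intro: mult_nonneg_nonneg less_imp_le[OF W_pos])
    finally show ?thesis .
  qed
  have S2: "W j powr (-s) * (\<Sum>k\<in>Kj. W k powr s * (cmod (a k))\<^sup>2 / W (mk k))
     \<le> 2 * real n powr (2 * s) * (\<Sum>k\<in>Kj. (2 / W (mk k) + 1 / W j) * (cmod (a k))\<^sup>2)"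
  proof -
    have "W j powr (-s) * (\<Sum>k\<in>Kj. W k powr s * (cmod (a k))\<^sup>2 / W (mk k))
       = (\<Sum>k\<in>Kj. (W j powr (-s) * W (j - int n * mk k) powr s / W (mk k)) * (cmod (a k))\<^sup>2)"
      by (simp add: sum_distrib_left kj[symmetric] mult.assoc cong: sum.cong)
    also have "\<dots> \<le> (\<Sum>k\<in>Kj. (2 * real n powr (2 * s) * (2 / W (mk k) + 1 / W j)) * (cmod (a k))\<^sup>2)"
      by (intro sum_mono mult_right_mono key_scalar n s) auto
    also have "\<dots> = 2 * real n powr (2 * s) * (\<Sum>k\<in>Kj. (2 / W (mk k) + 1 / W j) * (cmod (a k))\<^sup>2)"
      by (simp add: sum_distrib_left mult.assoc)
    finally show ?thesis .
  qed
  have S3: "(\<Sum>k\<in>Kj. (2 / W (mk k) + 1 / W j) * (cmod (a k))\<^sup>2)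
     \<le> (\<Sum>k\<in>K. (if int n dvd (j - k) then 2 / W ((j - k) div int n) else 0) * (cmod (a k))\<^sup>2)
        + (\<Sum>k\<in>K. (cmod (a k))\<^sup>2) / W j"
  proof -
    have "(\<Sum>k\<in>Kj. (2 / W (mk k) + 1 / W j) * (cmod (a k))\<^sup>2)
       = (\<Sum>k\<in>Kj. 2 / W (mk k) * (cmod (a k))\<^sup>2) + (\<Sum>k\<in>Kj. (cmod (a k))\<^sup>2) / W j"
      by (simp add: distrib_right sum.distrib sum_divide_distrib)
    also have "(\<Sum>k\<in>Kj. 2 / W (mk k) * (cmod (a k))\<^sup>2)
       = (\<Sum>k\<in>K. (if int n dvd (j - k) then 2 / W ((j - k) div int n) else 0) * (cmod (a k))\<^sup>2)"
      unfolding Kj_def mk_def sum.inter_filter[OF K] by (intro sum.cong) auto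
    also have "(\<Sum>k\<in>Kj. (cmod (a k))\<^sup>2) \<le> (\<Sum>k\<in>K. (cmod (a k))\<^sup>2)"
      using Kj K by (intro sum_mono2) auto
    then have "(\<Sum>k\<in>Kj. (cmod (a k))\<^sup>2) / W j \<le> (\<Sum>k\<in>K. (cmod (a k))\<^sup>2) / W j"
      using W_pos[of j] by (intro divide_right_mono) auto
    finally show ?thesis by simp
  qed
  have A0: "0 \<le> (\<Sum>k\<in>Kj. W k powr s * (cmod (a k))\<^sup>2 / W (mk k))"
    by (intro sum_nonneg) (auto intro: divide_nonneg_pos W_pos)
  have "W j powr (-s) * (cmod (\<Sum>k\<in>K. complex_of_real (W k powr (s/2)) * a k *
            (if int n dvd (j - k) then fh ((j - k) div int n) else 0)))\<^sup>2 \<le> W j powr (-s) * T\<^sup>2"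
    using PT by (intro mult_left_mono power_mono) auto
  also have "\<dots> \<le> W j powr (-s) * (Fs * (\<Sum>k\<in>Kj. W k powr s * (cmod (a k))\<^sup>2 / W (mk k)))"
    using CS S1 A0 by (intro mult_left_mono order.trans[OF CS] mult_right_mono) auto
  also have "\<dots> = Fs * (W j powr (-s) * (\<Sum>k\<in>Kj. W k powr s * (cmod (a k))\<^sup>2 / W (mk k)))"
    by simp
  also have "\<dots> \<le> Fs * (2 * real n powr (2 * s) * (\<Sum>k\<in>Kj. (2 / W (mk k) + 1 / W j) * (cmod (a k))\<^sup>2))"
    using S2 Fs0 by (intro mult_left_mono) auto
  also have "\<dots> \<le> Fs * (2 * real n powr (2 * s) * ((\<Sum>k\<in>K. (if int n dvd (j - k) then 2 / W ((j - k) div int n) else 0) * (cmod (a k))\<^sup>2)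
        + (\<Sum>k\<in>K. (cmod (a k))\<^sup>2) / W j))"
    using S3 Fs0 by (intro mult_left_mono) auto
  finally show ?thesis by (simp add: mult_ac)
qed


lemma invW_summable: "(\<lambda>m::int. 1 / W m) summable_on UNIV"
proof -
  have sn: "summable (\<lambda>n::nat. 1 / (1 + (real n)\<^sup>2))"
  proof (rule summable_comparison_test'[OF inverse_power_summable[of 2]])
    fix n :: nat assume "n \<ge> 1"
    then have p: "0 < (real n)\<^sup>2" by simp
    have q: "0 < 1 + (real n)\<^sup>2" by (simp add: add_pos_nonneg)
    have "inverse (1 + (real n)\<^sup>2) \<le> inverse ((real n)\<^sup>2)"
      using p by (intro le_imp_inverse_le) auto
    moreover have "norm (1 / (1 + (real n)\<^sup>2)) = inverse (1 + (real n)\<^sup>2)"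
      using q by (simp add: divide_inverse)
    ultimately show "norm (1 / (1 + (real n)\<^sup>2)) \<le> inverse ((of_nat n) ^ 2 :: real)"
      by simp
  qed simp
  have sn2: "summable (\<lambda>n::nat. 1 / (1 + (real (Suc n))\<^sup>2))"
    using sn by (subst summable_Suc_iff)
  have A: "(\<lambda>m::int. 1 / W m) summable_on range int"
    by (subst summable_on_reindex) (use sn in \<open>auto simp: o_def W_def summable_on_UNIV_nonneg_real_iff\<close>)
  have B: "(\<lambda>m::int. 1 / W m) summable_on range (\<lambda>n. - int (Suc n))"
  proof (subst summable_on_reindex)
    show "inj_on (\<lambda>n. - int (Suc n)) UNIV" by (auto simp: inj_on_def)
    have "(\<lambda>n. 1 / W (- int (Suc n))) = (\<lambda>n::nat. 1 / (1 + (real (Suc n))\<^sup>2))"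
      by (auto simp: W_def fun_eq_iff power2_eq_square algebra_simps)
    then show "((\<lambda>m. 1 / W m) \<circ> (\<lambda>n. - int (Suc n))) summable_on UNIV"
      using sn2 by (auto simp: o_def summable_on_UNIV_nonneg_real_iff)
  qed
  have U: "(UNIV :: int set) = range int \<union> range (\<lambda>n. - int (Suc n))"
  proof -
    have "x \<in> range int \<union> range (\<lambda>n. - int (Suc n))" for x :: int
    proof (cases "x \<ge> 0")
      case True then have "x = int (nat x)" by simp
      then show ?thesis by blast
    next
      case False then have "x = - int (Suc (nat (- x - 1)))" by simp
      then show ?thesis by blast
    qed
    then show ?thesis by blast
  qed
  show ?thesis by (subst U) (intro summable_on_union A B)
qed

definition SW :: real where "SW = infsum (\<lambda>m::int. 1 / W m) UNIV"

lemma SW_nonneg: "0 \<le> SW" unfolding SW_def by (intro infsum_nonneg) auto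

lemma shifted_has_sum:
  fixes n :: nat and k :: int
  assumes "n \<ge> 1"
  shows "((\<lambda>j. if int n dvd (j - k) then 2 / W ((j - k) div int n) else 0) has_sum (2 * SW)) UNIV"
proof -
  define h where "h m = k + int n * m" for m
  have inj: "inj_on h UNIV" using assms by (auto simp: inj_on_def h_def)
  have base: "((\<lambda>m. 2 / W m) has_sum (2 * SW)) UNIV"
    using has_sum_cmult_right[OF has_sum_infsum[OF invW_summable], of 2] by (simp add: SW_def)
  have "((\<lambda>j. if int n dvd (j - k) then 2 / W ((j - k) div int n) else 0) \<circ> h) = (\<lambda>m. 2 / W m)"
    using assms by (auto simp: h_def fun_eq_iff)
  then have "((\<lambda>j. if int n dvd (j - k) then 2 / W ((j - k) div int n) else 0) has_sum (2 * SW)) (h ` UNIV)"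
    using base by (simp add: has_sum_reindex[OF inj])
  moreover have hx: "x \<in> h ` UNIV" if "int n dvd (x - k)" for x
  proof -
    from that obtain q where "x - k = int n * q" by (auto elim: dvdE)
    then have "x = h q" by (simp add: h_def)
    then show ?thesis by blast
  qed
  moreover have "((\<lambda>j. if int n dvd (j - k) then 2 / W ((j - k) div int n) else 0) has_sum (2 * SW)) (h ` UNIV)
     \<longleftrightarrow> ((\<lambda>j. if int n dvd (j - k) then 2 / W ((j - k) div int n) else 0) has_sum (2 * SW)) UNIV"
    by (rule has_sum_cong_neutral) (use hx in auto)
  ultimately show ?thesis by blast
qed

lemma finite_sum_has_sum:
  fixes g :: "int \<Rightarrow> int \<Rightarrow> real"
  assumes "finite K" "\<And>k. k \<in> K \<Longrightarrow> ((\<lambda>j. g k j) has_sum c k) UNIV"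
  shows "((\<lambda>j. \<Sum>k\<in>K. g k j) has_sum (\<Sum>k\<in>K. c k)) UNIV"
  using assms
proof (induction K rule: finite_induct)
  case empty then show ?case by simp
next
  case (insert x F)
  then show ?case by (simp add: has_sum_add)
qed

lemma Q_has_sum:
  fixes a :: "int \<Rightarrow> complex" and K :: "int set" and n :: nat
  assumes K: "finite K" and n: "n \<ge> 1"
  shows "((\<lambda>j. (\<Sum>k\<in>K. (if int n dvd (j - k) then 2 / W ((j - k) div int n) else 0) * (cmod (a k))\<^sup>2)
        + (\<Sum>k\<in>K. (cmod (a k))\<^sup>2) / W j) has_sum (3 * SW * (\<Sum>k\<in>K. (cmod (a k))\<^sup>2))) UNIV"
proof -
  have 1: "((\<lambda>j. \<Sum>k\<in>K. (if int n dvd (j - k) then 2 / W ((j - k) div int n) else 0) * (cmod (a k))\<^sup>2)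
     has_sum (\<Sum>k\<in>K. 2 * SW * (cmod (a k))\<^sup>2)) UNIV"
    by (rule finite_sum_has_sum[OF K]) (intro has_sum_cmult_left shifted_has_sum n)
  have 2: "((\<lambda>j. (\<Sum>k\<in>K. (cmod (a k))\<^sup>2) / W j) has_sum ((\<Sum>k\<in>K. (cmod (a k))\<^sup>2) * SW)) UNIV"
    using has_sum_cmult_right[OF has_sum_infsum[OF invW_summable], of "\<Sum>k\<in>K. (cmod (a k))\<^sup>2"]
    by (simp add: SW_def)
  have "(\<Sum>k\<in>K. 2 * SW * (cmod (a k))\<^sup>2) + (\<Sum>k\<in>K. (cmod (a k))\<^sup>2) * SW = 3 * SW * (\<Sum>k\<in>K. (cmod (a k))\<^sup>2)"
    by (simp add: sum_distrib_left[symmetric] algebra_simps)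
  then show ?thesis using has_sum_add[OF 1 2] by (simp add: mult.assoc)
qed


lemma periodic_nat:
  assumes "periodic2pi f"
  shows "f (x + 2 * pi * real t) = f x"
proof (induction t)
  case 0 then show ?case by simp
next
  case (Suc t)
  have "f (x + 2 * pi * real (Suc t)) = f ((x + 2 * pi * real t) + 2 * pi)"
    by (simp add: algebra_simps)
  also have "\<dots> = f (x + 2 * pi * real t)" using assms by (simp add: periodic2pi_def)
  finally show ?case using Suc by simp
qed

lemma L2_abs_int:
  fixes g :: "real \<Rightarrow> complex"
  assumes f: "in_L2 f" and g: "continuous_on UNIV g" "\<And>x. cmod (g x) \<le> 1"
  shows "(\<lambda>x. f x * g x) absolutely_integrable_on {0..2*pi}"
proof (rule measurable_bounded_by_integrable_imp_absolutely_integrable)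
  have fm: "f \<in> borel_measurable lebesgue" using f by (simp add: in_L2_def)
  have gm: "g \<in> borel_measurable lebesgue"
    using continuous_imp_measurable_on_sets_lebesgue[OF g(1)] by simp
  show "(\<lambda>x. f x * g x) \<in> borel_measurable (lebesgue_on {0..2*pi})"
    by (intro measurable_restrict_space1 borel_measurable_times fm gm)
  show "{0..2*pi} \<in> sets lebesgue" by simp
  have sq: "(\<lambda>x. (cmod (f x))\<^sup>2) absolutely_integrable_on {0..2*pi}"
    using f by (simp add: in_L2_def)
  have "(\<lambda>x. (cmod (f x))\<^sup>2) integrable_on {0..2*pi}"
    using set_lebesgue_integral_eq_integral(1)[OF sq] .
  then show "(\<lambda>x. (1 + (cmod (f x))\<^sup>2) / 2) integrable_on {0..2*pi}"
    by (intro integrable_on_divide integrable_add) auto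
  fix x assume "x \<in> {0..2*pi}"
  have "cmod (f x * g x) \<le> cmod (f x)"
    using g(2)[of x] by (simp add: norm_mult mult_left_le)
  also have "\<dots> \<le> (1 + (cmod (f x))\<^sup>2) / 2"
  proof -
    have "0 \<le> (cmod (f x) - 1)\<^sup>2" by simp
    then show ?thesis by (simp add: power2_eq_square algebra_simps)
  qed
  finally show "norm (f x * g x) \<le> (1 + (cmod (f x))\<^sup>2) / 2" .
qed

lemma periods_has_integral:
  fixes \<phi> :: "real \<Rightarrow> 'b::banach" and n :: nat
  assumes "n \<ge> 1" and per: "\<And>t. t < n \<Longrightarrow> (\<phi> has_integral v t) {2*pi*real t .. 2*pi*real t + 2*pi}"
  shows "((\<lambda>x. \<phi> (real n * x)) has_integral ((1 / real n) *\<^sub>R (\<Sum>t<n. v t))) {0..2*pi}"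
proof -
  have comb: "N \<le> n \<Longrightarrow> (\<phi> has_integral (\<Sum>t<N. v t)) {0..2*pi*real N}" for N
  proof (induction N)
    case 0 then show ?case by (simp add: has_integral_refl)
  next
    case (Suc N)
    then have "(\<phi> has_integral (\<Sum>t<N. v t) + v N) {0..2*pi*real N + 2*pi}"
      by (intro has_integral_combine[where c="2*pi*real N"] per) auto
    then show ?case by (simp add: algebra_simps)
  qed
  have I: "(\<phi> has_integral (\<Sum>t<n. v t)) (cbox 0 (2*pi*real n))"
    using comb[of n] by simp
  have "((\<lambda>x. \<phi> (real n *\<^sub>R x + 0)) has_integral ((\<Sum>t<n. v t) /\<^sub>R real n ^ DIM(real)))
           (cbox ((0 - 0) /\<^sub>R real n) ((2*pi*real n - 0) /\<^sub>R real n))"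
    using assms(1) by (intro has_integral_affinity'[OF I]) auto
  moreover have "inverse (real n) * (2 * pi * real n) = 2 * pi" using assms(1) by simp
  ultimately show ?thesis using assms(1) by (simp add: divide_inverse_commute)
qed


lemma cmod_exp_imag: "cmod (exp (- (\<i> * complex_of_real a * complex_of_real y))) = 1"
  by (simp add: norm_exp_eq_Re)

lemma cont_exp_imag: "continuous_on UNIV (\<lambda>y. exp (- (\<i> * complex_of_real a * complex_of_real y)))"
  by (intro continuous_intros)

lemma fcoeff_integral:
  assumes f: "in_L2 f"
  shows "fcoeff f q = complex_of_real (1 / (2 * pi)) *
     integral {0..2*pi} (\<lambda>x. f x * exp (- (\<i> * of_int q * complex_of_real x)))"
proof -
  have c: "continuous_on UNIV (\<lambda>x. exp (- (\<i> * of_int q * complex_of_real x)))"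
    by (intro continuous_intros)
  have ai: "(\<lambda>x. f x * exp (- (\<i> * of_int q * complex_of_real x))) absolutely_integrable_on {0..2*pi}"
    by (intro L2_abs_int f c) (simp add: norm_exp_eq_Re)
  show ?thesis unfolding fcoeff_def set_lebesgue_integral_eq_integral(2)[OF ai] by (rule refl)
qed

lemma dil_coeff:
  fixes f :: "real \<Rightarrow> complex" and n :: nat and l :: int
  assumes f: "in_L2 f" and n: "n \<ge> 1"
  shows "(\<lambda>x. f (real n * x) * exp (- (\<i> * of_int l * complex_of_real x))) absolutely_integrable_on {0..2*pi}"
    and "integral {0..2*pi} (\<lambda>x. f (real n * x) * exp (- (\<i> * of_int l * complex_of_real x)))
        = (if int n dvd l then 2 * pi * fcoeff f (l div int n) else 0)"
proof -
  have per: "periodic2pi f" using f by (simp add: in_L2_def)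
  define \<theta> where "\<theta> = real_of_int l / real n"
  define E where "E y = exp (- (\<i> * complex_of_real \<theta> * complex_of_real y))" for y
  define \<phi> where "\<phi> y = f y * E y" for y
  define \<omega> where "\<omega> = exp (- (\<i> * complex_of_real \<theta> * complex_of_real (2 * pi)))"
  have nz: "real n \<noteq> 0" using n by simp
  have fE: "\<phi> absolutely_integrable_on {0..2*pi}"
    unfolding \<phi>_def E_def by (intro L2_abs_int f cont_exp_imag) (simp add: cmod_exp_imag)
  define J where "J = integral {0..2*pi} \<phi>"
  have J: "(\<phi> has_integral J) {0..2*pi}"
    unfolding J_def using set_lebesgue_integral_eq_integral(1)[OF fE] by (simp add: integrable_integral)
  have shift: "\<phi> (y + 2 * pi * real t) = \<omega> ^ t * \<phi> y" for y t
  proof -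
    have "E (y + 2 * pi * real t) = E y * \<omega> ^ t"
    proof -
      have eq: "- (\<i> * complex_of_real \<theta> * complex_of_real (y + 2 * pi * real t))
          = - (\<i> * complex_of_real \<theta> * complex_of_real y) + of_nat t * (- (\<i> * complex_of_real \<theta> * complex_of_real (2 * pi)))"
        by (simp add: algebra_simps)
      show ?thesis unfolding E_def \<omega>_def eq exp_add exp_of_nat_mult ..
    qed
    then show ?thesis unfolding \<phi>_def using periodic_nat[OF per] by simp
  qed
  have pers: "(\<phi> has_integral \<omega> ^ t * J) {2*pi*real t .. 2*pi*real t + 2*pi}" for t
  proof -
    have "((\<lambda>y. \<omega> ^ t * \<phi> y) has_integral \<omega> ^ t * J) {0..2*pi}"
      by (rule has_integral_mult_right[OF J])
    then have "((\<phi> \<circ> (+) (2 * pi * real t)) has_integral \<omega> ^ t * J) {0..2*pi}"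
      by (simp add: o_def shift add.commute)
    then show ?thesis by (simp add: has_integral_shift_Icc_real add.commute)
  qed
  have main: "((\<lambda>x. \<phi> (real n * x)) has_integral ((1 / real n) *\<^sub>R (\<Sum>t<n. \<omega> ^ t * J))) {0..2*pi}"
    by (intro periods_has_integral n pers)
  have eqf: "\<phi> (real n * x) = f (real n * x) * exp (- (\<i> * of_int l * complex_of_real x))" for x
  proof -
    have r: "\<theta> * (real n * x) = real_of_int l * x" unfolding \<theta>_def using nz by simp
    have "complex_of_real \<theta> * complex_of_real (real n * x) = of_int l * complex_of_real x"
      by (metis r of_real_mult of_real_of_int_eq)
    then show ?thesis unfolding \<phi>_def E_def by (simp only: mult.assoc)
  qed
  have main': "((\<lambda>x. f (real n * x) * exp (- (\<i> * of_int l * complex_of_real x))) has_integral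
      ((1 / real n) *\<^sub>R (\<Sum>t<n. \<omega> ^ t * J))) {0..2*pi}"
    using main by (simp add: eqf)
  have fa: "f absolutely_integrable_on {0..2*pi}"
    using L2_abs_int[OF f, of "\<lambda>_. 1"] by simp
  have nf: "(\<lambda>y. cmod (f y)) integrable_on {0..2*pi}"
    using fa absolutely_integrable_on_def by blast
  have npers: "((\<lambda>y. cmod (f y)) has_integral integral {0..2*pi} (\<lambda>y. cmod (f y))) {2*pi*real t .. 2*pi*real t + 2*pi}" for t
  proof -
    have "(((\<lambda>y. cmod (f y)) \<circ> (+) (2 * pi * real t)) has_integral integral {0..2*pi} (\<lambda>y. cmod (f y))) {0..2*pi}"
      using nf periodic_nat[OF per] by (simp add: o_def add.commute integrable_integral)
    then show ?thesis by (simp add: has_integral_shift_Icc_real add.commute)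
  qed
  from periods_has_integral[OF n npers] have nint: "(\<lambda>x. cmod (f (real n * x))) integrable_on {0..2*pi}" by blast
  show "(\<lambda>x. f (real n * x) * exp (- (\<i> * of_int l * complex_of_real x))) absolutely_integrable_on {0..2*pi}"
    unfolding absolutely_integrable_on_def
  proof
    show "(\<lambda>x. f (real n * x) * exp (- (\<i> * of_int l * complex_of_real x))) integrable_on {0..2*pi}"
      using main' by blast
    have "norm (f (real n * x) * exp (- (\<i> * of_int l * complex_of_real x))) = cmod (f (real n * x))" for x
      by (simp add: norm_mult norm_exp_eq_Re)
    then show "(\<lambda>x. norm (f (real n * x) * exp (- (\<i> * of_int l * complex_of_real x)))) integrable_on {0..2*pi}"
      using nint by simp
  qed
  have val: "(1 / real n) *\<^sub>R (\<Sum>t<n. \<omega> ^ t * J) = (if int n dvd l then 2 * pi * fcoeff f (l div int n) else 0)"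
  proof (cases "int n dvd l")
    case True
    then obtain q where q: "l = int n * q" by (auto elim: dvdE)
    have th: "\<theta> = real_of_int q" unfolding \<theta>_def q using nz by simp
    have w1: "\<omega> = 1" unfolding \<omega>_def th exp_eq_1
      by (auto intro!: exI[of _ "- q"])
    have qd: "l div int n = q" using q n by simp
    have "J = 2 * pi * fcoeff f q"
      unfolding J_def \<phi>_def E_def th fcoeff_integral[OF f] by simp
    then show ?thesis using True w1 qd nz by (simp add: scaleR_conv_of_real)
  next
    case False
    have w1: "\<omega> \<noteq> 1"
    proof
      assume "\<omega> = 1"
      then obtain k :: int where "- (\<theta> * (2 * pi)) = of_int (2 * k) * pi"
        unfolding \<omega>_def exp_eq_1 by auto
      then have "pi * (\<theta> + of_int k) = 0" by (simp add: algebra_simps)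
      then have "\<theta> = - of_int k" by (simp add: pi_neq_zero add_eq_0_iff)
      then have "real_of_int l = real_of_int (- k * int n)" unfolding \<theta>_def using nz by (simp add: field_simps)
      then have "l = - k * int n" by linarith
      then show False using False by simp
    qed
    have wn: "\<omega> ^ n = 1"
    proof -
      have "\<omega> ^ n = exp (of_nat n * (- (\<i> * complex_of_real \<theta> * complex_of_real (2 * pi))))"
        unfolding \<omega>_def by (rule exp_of_nat_mult[symmetric])
      also have "of_nat n * (- (\<i> * complex_of_real \<theta> * complex_of_real (2 * pi))) = - (\<i> * complex_of_real (real_of_int l * (2 * pi)))"
        unfolding \<theta>_def using nz by (simp add: field_simps)
      also have "exp \<dots> = 1" unfolding exp_eq_1 by (auto intro!: exI[of _ "- l"])
      finally show ?thesis .
    qed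
    have "(\<Sum>t<n. \<omega> ^ t) = 0" using w1 wn by (simp add: sum_gp_strict)
    then show ?thesis using False by (simp add: sum_distrib_right[symmetric])
  qed
  show "integral {0..2*pi} (\<lambda>x. f (real n * x) * exp (- (\<i> * of_int l * complex_of_real x)))
        = (if int n dvd l then 2 * pi * fcoeff f (l div int n) else 0)"
    using integral_unique[OF main'] val by simp
qed


lemma exp_2pi_int: "exp (complex_of_real (2 * pi) * (\<i> * of_int m)) = 1"
  unfolding exp_eq_1 by (auto intro!: exI[of _ m])

lemma orth_has_integral:
  "((\<lambda>x. exp (\<i> * of_int m * complex_of_real x)) has_integral (if m = 0 then complex_of_real (2 * pi) else 0)) {0..2*pi}"
proof (cases "m = 0")
  case True
  then show ?thesis using has_integral_const_real[of "1::complex" 0 "2*pi"]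
    by (simp add: scaleR_conv_of_real)
next
  case False
  define A where "A = \<i> * (of_int m :: complex)"
  have A: "A \<noteq> 0" using False by (simp add: A_def)
  have e: "exp (\<i> * of_int m * complex_of_real x) = exp (x *\<^sub>R A)" for x
    by (simp add: A_def scaleR_conv_of_real mult_ac)
  have d: "((\<lambda>t. exp (t *\<^sub>R A) / A) has_vector_derivative exp (x *\<^sub>R A) * A / A) (at x within {0..2*pi})" for x
    by (intro has_vector_derivative_divide exp_scaleR_has_vector_derivative_right)
  have "((\<lambda>x. exp (x *\<^sub>R A) * A / A) has_integral (exp ((2*pi) *\<^sub>R A) / A - exp (0 *\<^sub>R A) / A)) {0..2*pi}"
    by (intro fundamental_theorem_of_calculus d) auto
  moreover have "exp ((2*pi) *\<^sub>R A) = 1"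
    using exp_2pi_int[of m] by (simp add: A_def scaleR_conv_of_real)
  ultimately show ?thesis using A False by (simp add: e)
qed

lemma trig_poly_norm:
  assumes K: "finite K"
  shows "L2norm (trig_poly K a) = sqrt (\<Sum>k\<in>K. (cmod (a k))\<^sup>2)"
proof -
  define tp where "tp = trig_poly K a"
  have ctp: "continuous_on UNIV tp" unfolding tp_def trig_poly_def by (intro continuous_intros)
  have cs: "continuous_on {0..2*pi} (\<lambda>x. (cmod (tp x))\<^sup>2)"
    by (intro continuous_intros continuous_on_subset[OF ctp]) auto
  have ai: "(\<lambda>x. (cmod (tp x))\<^sup>2) absolutely_integrable_on {0..2*pi}"
    unfolding absolutely_integrable_on_def using integrable_continuous_interval[OF cs] by simp
  have prod: "complex_of_real ((cmod (tp x))\<^sup>2) =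
      (\<Sum>k\<in>K. \<Sum>l\<in>K. (a k * cnj (a l)) * exp (\<i> * of_int (k - l) * complex_of_real x))" for x
  proof -
    have "complex_of_real ((cmod (tp x))\<^sup>2) = tp x * cnj (tp x)" by (rule complex_norm_square)
    also have "\<dots> = (\<Sum>k\<in>K. a k * exp (\<i> * of_int k * complex_of_real x)) *
        (\<Sum>l\<in>K. cnj (a l) * exp (- (\<i> * of_int l * complex_of_real x)))"
      unfolding tp_def trig_poly_def by (simp add: cnj_sum exp_cnj)
    also have "\<dots> = (\<Sum>k\<in>K. \<Sum>l\<in>K. (a k * exp (\<i> * of_int k * complex_of_real x)) *
        (cnj (a l) * exp (- (\<i> * of_int l * complex_of_real x))))"
      by (simp add: sum_product)
    also have "\<dots> = (\<Sum>k\<in>K. \<Sum>l\<in>K. (a k * cnj (a l)) * exp (\<i> * of_int (k - l) * complex_of_real x))"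
    proof (intro sum.cong refl)
      fix k l
      have "exp (\<i> * of_int k * complex_of_real x) * exp (- (\<i> * of_int l * complex_of_real x))
          = exp (\<i> * of_int (k - l) * complex_of_real x)"
        by (simp add: exp_add[symmetric] algebra_simps)
      then show "(a k * exp (\<i> * of_int k * complex_of_real x)) * (cnj (a l) * exp (- (\<i> * of_int l * complex_of_real x)))
          = (a k * cnj (a l)) * exp (\<i> * of_int (k - l) * complex_of_real x)"
        by (simp add: mult_ac)
    qed
    finally show ?thesis .
  qed
  have hi: "((\<lambda>x. \<Sum>k\<in>K. \<Sum>l\<in>K. (a k * cnj (a l)) * exp (\<i> * of_int (k - l) * complex_of_real x)) has_integral
      (\<Sum>k\<in>K. \<Sum>l\<in>K. (a k * cnj (a l)) * (if k - l = 0 then complex_of_real (2 * pi) else 0))) {0..2*pi}"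
    by (intro has_integral_sum K has_integral_mult_right orth_has_integral)
  have "(\<Sum>k\<in>K. \<Sum>l\<in>K. (a k * cnj (a l)) * (if k - l = 0 then complex_of_real (2 * pi) else 0))
      = (\<Sum>k\<in>K. complex_of_real (2 * pi * (cmod (a k))\<^sup>2))"
  proof (intro sum.cong refl)
    fix k assume "k \<in> K"
    have "(\<Sum>l\<in>K. (a k * cnj (a l)) * (if k - l = 0 then complex_of_real (2 * pi) else 0))
        = (\<Sum>l\<in>K. if l = k then (a k * cnj (a l)) * complex_of_real (2 * pi) else 0)"
      by (intro sum.cong refl) auto
    also have "\<dots> = a k * cnj (a k) * complex_of_real (2 * pi)"
      using \<open>k \<in> K\<close> K by simp
    also have "\<dots> = complex_of_real ((cmod (a k))\<^sup>2) * complex_of_real (2 * pi)"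
      by (simp only: complex_norm_square)
    also have "\<dots> = complex_of_real (2 * pi * (cmod (a k))\<^sup>2)"
      by (simp only: of_real_mult mult.commute)
    finally show "(\<Sum>l\<in>K. (a k * cnj (a l)) * (if k - l = 0 then complex_of_real (2 * pi) else 0))
        = complex_of_real (2 * pi * (cmod (a k))\<^sup>2)" .
  qed
  also have "\<dots> = complex_of_real (2 * pi * (\<Sum>k\<in>K. (cmod (a k))\<^sup>2))"
    by (simp add: sum_distrib_left)
  finally have eqv: "(\<Sum>k\<in>K. \<Sum>l\<in>K. (a k * cnj (a l)) * (if k - l = 0 then complex_of_real (2 * pi) else 0))
      = complex_of_real (2 * pi * (\<Sum>k\<in>K. (cmod (a k))\<^sup>2))" .
  have "((\<lambda>x. complex_of_real ((cmod (tp x))\<^sup>2)) has_integral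
      complex_of_real (2 * pi * (\<Sum>k\<in>K. (cmod (a k))\<^sup>2))) {0..2*pi}"
    unfolding prod eqv[symmetric] by (rule hi)
  from has_integral_Re[OF this]
  have "((\<lambda>x. (cmod (tp x))\<^sup>2) has_integral 2 * pi * (\<Sum>k\<in>K. (cmod (a k))\<^sup>2)) {0..2*pi}"
    by simp
  then have "(LINT x:{0..2*pi}|lebesgue. (cmod (tp x))\<^sup>2) = 2 * pi * (\<Sum>k\<in>K. (cmod (a k))\<^sup>2)"
    unfolding set_lebesgue_integral_eq_integral(2)[OF ai] by (rule integral_unique)
  then show ?thesis unfolding L2norm_def tp_def by simp
qed



lemma pcoeff:
  fixes f :: "real \<Rightarrow> complex" and n :: nat and K :: "int set" and a :: "int \<Rightarrow> complex" and s :: real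
  assumes f: "in_L2 f" and n: "n \<ge> 1" and K: "finite K"
  shows "fcoeff (\<lambda>x. dilate (1 / real n) f x * bessel_trig s K a x) j
    = (\<Sum>k\<in>K. complex_of_real (W k powr (s/2)) * a k *
            (if int n dvd (j - k) then fcoeff f ((j - k) div int n) else 0))"
proof -
  define c where "c k = complex_of_real (W k powr (s/2)) * a k" for k
  define g where "g k x = f (real n * x) * exp (- (\<i> * of_int (j - k) * complex_of_real x))" for k x
  have nz: "real n \<noteq> 0" using n by simp
  have pe: "dilate (1 / real n) f x * bessel_trig s K a x * exp (- (\<i> * of_int j * complex_of_real x))
      = (\<Sum>k\<in>K. c k * g k x)" for x
  proof -
    have d: "dilate (1 / real n) f x = f (real n * x)" unfolding dilate_def by (simp add: mult.commute)
    have e: "exp (\<i> * of_int k * complex_of_real x) * exp (- (\<i> * of_int j * complex_of_real x))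
        = exp (- (\<i> * of_int (j - k) * complex_of_real x))" for k
      by (simp add: exp_add[symmetric] algebra_simps)
    have "dilate (1 / real n) f x * bessel_trig s K a x * exp (- (\<i> * of_int j * complex_of_real x))
      = (\<Sum>k\<in>K. c k * (f (real n * x) * (exp (\<i> * of_int k * complex_of_real x) * exp (- (\<i> * of_int j * complex_of_real x)))))"
      unfolding d bessel_trig_def c_def W_def by (simp add: sum_distrib_left sum_distrib_right mult_ac)
    also have "\<dots> = (\<Sum>k\<in>K. c k * g k x)" unfolding g_def e ..
    finally show ?thesis .
  qed
  have gi: "g k absolutely_integrable_on {0..2*pi}" for k
    unfolding g_def by (rule dil_coeff(1)[OF f n])
  have gv: "integral {0..2*pi} (g k) = (if int n dvd (j - k) then 2 * pi * fcoeff f ((j - k) div int n) else 0)" for k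
    unfolding g_def by (rule dil_coeff(2)[OF f n])
  have ai: "(\<lambda>x. \<Sum>k\<in>K. c k * g k x) absolutely_integrable_on {0..2*pi}"
    by (intro absolutely_integrable_sum K set_integrable_mult_right gi)
  have "(LINT x:{0..2*pi}|lebesgue. dilate (1 / real n) f x * bessel_trig s K a x * exp (- (\<i> * of_int j * complex_of_real x)))
      = integral {0..2*pi} (\<lambda>x. \<Sum>k\<in>K. c k * g k x)"
    unfolding pe set_lebesgue_integral_eq_integral(2)[OF ai] ..
  also have "\<dots> = (\<Sum>k\<in>K. integral {0..2*pi} (\<lambda>x. c k * g k x))"
    using gi by (intro integral_sum K integrable_on_cmult_right) (simp add: set_lebesgue_integral_eq_integral(1))
  also have "\<dots> = (\<Sum>k\<in>K. c k * integral {0..2*pi} (g k))"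
    using gi by (intro sum.cong refl integral_unique has_integral_mult_right integrable_integral)
       (simp add: set_lebesgue_integral_eq_integral(1))
  finally have L: "(LINT x:{0..2*pi}|lebesgue. dilate (1 / real n) f x * bessel_trig s K a x * exp (- (\<i> * of_int j * complex_of_real x)))
      = (\<Sum>k\<in>K. c k * (if int n dvd (j - k) then 2 * pi * fcoeff f ((j - k) div int n) else 0))"
    by (simp add: gv)
  show ?thesis unfolding fcoeff_def L
    by (simp add: sum_distrib_left c_def if_distrib mult_ac cong: if_cong)
qed


theorem lemma4p8:
  shows "\<forall>s\<in>{0..1::real}. \<exists>C::real. \<forall>f \<epsilon> (K::int set) (a::int \<Rightarrow> complex).
     in_H1 f \<longrightarrow> 0 < \<epsilon> \<longrightarrow> \<epsilon> < 1 \<longrightarrow> 1 / \<epsilon> \<in> \<nat> \<longrightarrow> finite K \<longrightarrow>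
     (let p = (\<lambda>x. dilate \<epsilon> f x * bessel_trig s K a x) in
        Hs_summable (- s) p \<and>
        Hs_norm (- s) p \<le> C * \<epsilon> powr (- s) * Hs_norm 1 f * L2norm (trig_poly K a))"
proof
  fix s :: real assume "s \<in> {0..1}"
  then have s: "0 \<le> s" "s \<le> 1" by auto
  show "\<exists>C::real. \<forall>f \<epsilon> (K::int set) (a::int \<Rightarrow> complex).
     in_H1 f \<longrightarrow> 0 < \<epsilon> \<longrightarrow> \<epsilon> < 1 \<longrightarrow> 1 / \<epsilon> \<in> \<nat> \<longrightarrow> finite K \<longrightarrow>
     (let p = (\<lambda>x. dilate \<epsilon> f x * bessel_trig s K a x) in
        Hs_summable (- s) p \<and>
        Hs_norm (- s) p \<le> C * \<epsilon> powr (- s) * Hs_norm 1 f * L2norm (trig_poly K a))"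
  proof (intro exI[of _ "sqrt (6 * SW)"] allI impI)
    fix f :: "real \<Rightarrow> complex" and \<epsilon> :: real and K :: "int set" and a :: "int \<Rightarrow> complex"
    assume H1: "in_H1 f" and e0: "0 < \<epsilon>" and e1: "\<epsilon> < 1" and eN: "1 / \<epsilon> \<in> \<nat>" and K: "finite K"
    from eN obtain n where nd: "1 / \<epsilon> = real n" by (auto elim: Nats_cases)
    have n: "n \<ge> 1"
    proof -
      have "1 / \<epsilon> > 1" using e0 e1 by (simp add: field_simps)
      then show ?thesis using nd by simp
    qed
    have eps: "\<epsilon> = 1 / real n"
    proof -
      have "\<epsilon> = 1 / (1 / \<epsilon>)" by simp
      then show ?thesis unfolding nd .
    qed
    have fL2: "in_L2 f" using H1 by (simp add: in_H1_def)
    define fh where "fh = fcoeff f"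
    have Weq: "(\<lambda>k. (1 + (real_of_int k)\<^sup>2) powr 1 * (cmod (fcoeff f k))\<^sup>2) = (\<lambda>m. W m * (cmod (fh m))\<^sup>2)"
      by (simp add: fun_eq_iff W_def fh_def add_nonneg_nonneg)
    have sm: "(\<lambda>m. W m * (cmod (fh m))\<^sup>2) summable_on UNIV"
      using H1 Weq by (simp add: in_H1_def Hs_summable_def)
    define Fs where "Fs = infsum (\<lambda>m. W m * (cmod (fh m))\<^sup>2) UNIV"
    have Fs0: "0 \<le> Fs" unfolding Fs_def by (intro infsum_nonneg) auto
    have HF: "Hs_norm 1 f = sqrt Fs" unfolding Hs_norm_def Fs_def Weq ..
    define A where "A = (\<Sum>k\<in>K. (cmod (a k))\<^sup>2)"
    have A0: "0 \<le> A" unfolding A_def by (intro sum_nonneg) auto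
    have LA: "L2norm (trig_poly K a) = sqrt A" unfolding A_def by (rule trig_poly_norm[OF K])
    define p where "p = (\<lambda>x. dilate \<epsilon> f x * bessel_trig s K a x)"
    define B where "B j = (1 + (real_of_int j)\<^sup>2) powr (- s) * (cmod (fcoeff p j))\<^sup>2" for j
    define Q where "Q j = (\<Sum>k\<in>K. (if int n dvd (j - k) then 2 / W ((j - k) div int n) else 0) * (cmod (a k))\<^sup>2)
        + (\<Sum>k\<in>K. (cmod (a k))\<^sup>2) / W j" for j
    define N where "N = 2 * real n powr (2 * s) * Fs"
    have N0: "0 \<le> N" unfolding N_def using Fs0 by simp
    have Bbound: "B j \<le> N * Q j" for j
    proof -
      have "B j = W j powr (-s) * (cmod (\<Sum>k\<in>K. complex_of_real (W k powr (s/2)) * a k *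
            (if int n dvd (j - k) then fh ((j - k) div int n) else 0)))\<^sup>2"
        unfolding B_def p_def eps pcoeff[OF fL2 n K] fh_def by (simp add: W_def)
      also have "\<dots> \<le> N * Q j"
        unfolding N_def Q_def Fs_def by (rule pointwise_bound[OF K n s sm])
      finally show ?thesis .
    qed
    have B0: "0 \<le> B j" for j unfolding B_def by simp
    have Qs: "(Q has_sum (3 * SW * A)) UNIV" unfolding Q_def A_def by (rule Q_has_sum[OF K n])
    have NQs: "((\<lambda>j. N * Q j) has_sum (N * (3 * SW * A))) UNIV"
      by (rule has_sum_cmult_right[OF Qs])
    have Bsum: "B summable_on UNIV"
      by (rule summable_on_comparison_test[OF has_sum_imp_summable[OF NQs]]) (use Bbound B0 in auto)
    have Ble: "infsum B UNIV \<le> N * (3 * SW * A)"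
      using infsum_mono[OF Bsum has_sum_imp_summable[OF NQs] Bbound] NQs by (simp add: infsumI)
    have "Hs_norm (- s) p = sqrt (infsum B UNIV)" unfolding Hs_norm_def B_def ..
    also have "\<dots> \<le> sqrt (N * (3 * SW * A))" using Ble by simp
    also have "N * (3 * SW * A) = (6 * SW) * (real n powr s)\<^sup>2 * Fs * A"
    proof -
      have "(real n powr s)\<^sup>2 = real n powr (2 * s)"
        by (simp add: power2_eq_square powr_add[symmetric])
      then show ?thesis unfolding N_def by (simp add: mult_ac)
    qed
    also have "sqrt (6 * SW * (real n powr s)\<^sup>2 * Fs * A) = sqrt (6 * SW) * \<epsilon> powr (- s) * sqrt Fs * sqrt A"
    proof -
      have "\<epsilon> powr (- s) = real n powr s" unfolding eps using n by (simp add: powr_minus_divide powr_divide)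
      then show ?thesis by (simp add: real_sqrt_mult)
    qed
    finally have bound: "Hs_norm (- s) p \<le> sqrt (6 * SW) * \<epsilon> powr (- s) * Hs_norm 1 f * L2norm (trig_poly K a)"
      unfolding HF LA .
    have summ: "Hs_summable (- s) p" unfolding Hs_summable_def using Bsum unfolding B_def .
    show "let p = (\<lambda>x. dilate \<epsilon> f x * bessel_trig s K a x) in
        Hs_summable (- s) p \<and>
        Hs_norm (- s) p \<le> sqrt (6 * SW) * \<epsilon> powr (- s) * Hs_norm 1 f * L2norm (trig_poly K a)"
      using bound summ unfolding p_def Let_def by simp
  qed
qed

end
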